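(* Assume (A1)–(A3), the latent index model (LI) below, and that $\Gamma^{Wald}$ is positive definite. Let $w^P$ be the MTE weight function of a policy that changes the propensity score distribution. Then there exists a unique $$\omega^{PRTE}=\arg\min_{\omega\in\mathcal S}\omega'\Gamma^{Wald}\omega,\qquad\text{where}\quad\mathcal S=\arg\min_{\omega\in\Delta^{L-1}}\int_0^1\bigl[\bar h(u;\omega)-w^P(u)\bigr]^2du.$$
   Context: Observe i.i.d. $(Y_i,D_i,\mathbf Z_i)$, $Y_i\in\mathbb R$, $D_i\in\{0,1\}$, $\mathbf Z_i=(Z_{1i},\dots,Z_{Li})'\in\{0,1\}^L$, $L\ge2$; potential outcomes $Y_i(0),Y_i(1)$, compliance type $D_i(\cdot):\{0,1\}^L\to\{0,1\}$, $D_i=D_i(\mathbf Z_i)$, $Y_i=D_iY_i(1)+(1-D_i)Y_i(0)$. $p_\ell=P(Z_{\ell i}=1)$, $\pi_\ell,\rho_\ell$ the differences of $\mathbb E[D_i\mid Z_{\ell i}=z]$, $\mathbb E[Y_i\mid Z_{\ell i}=z]$ between $z=1,0$, $\mathrm{Wald}_\ell=\rho_\ell/\pi_\ell$, $\gamma_\ell=\mathrm{Cov}(D_i,Z_{\ell i})$, $\Sigma_Z=\mathrm{Var}(\mathbf Z_i)$. $\Gamma^{Wald}_{\ell k}=\mathbb E[\tilde\epsilon_{i,\ell}\tilde\epsilon_{i,k}(Z_{\ell i}-p_\ell)(Z_{ki}-p_k)]/(\gamma_\ell\gamma_k)$, $\tilde\epsilon_{i,\ell}=Y_i-\mathrm{Wald}_\ell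 D_i-(\mathbb E[Y_i]-\mathrm{Wald}_\ell\mathbb E[D_i])$. $\Delta^{L-1}$ is the probability simplex in $\mathbb R^L$. (LI): $D_i=\mathbf 1\{V(\mathbf Z_i)\ge U_i\}$, $U_i\sim\mathrm{Uniform}(0,1)$ conditional on potential outcomes; $p(z)=V(z)=P(D_i=1\mid\mathbf Z_i=z)$; $h_\ell(u)=\dfrac{P(p(\mathbf Z_i)\ge u\mid Z_{\ell i}=1)-P(p(\mathbf Z_i)\ge u\mid Z_{\ell i}=0)}{\mathbb E[p(\mathbf Z_i)\mid Z_{\ell i}=1]-\mathbb E[p(\mathbf Z_i)\mid Z_{\ell i}=0]}$, $\bar h(u;\omega)=\sum_\ell\omega_\ell h_\ell(u)$. A policy moving the instrument distribution from $F_0$ to $F_1$ has weight $w^P(u)=(F_0(u)-F_1(u))/\int_0^1(F_0(s)-F_1(s))ds$, where $F_j(u)=P(p(\mathbf Z_i)\ge u\mid\text{policy }j)$ (denominator assumed nonzero). Assumptions: (A1) $(Y_i(0),Y_i(1),D_i(\cdot))$ independent of $\mathbf Z_i$. (A2) $D_i(z)$ nondecreasing in each coordinate for every $i$. (A3) $p_\ell>0$, $\pi_\ell>0$ for all $\ell$; $\Sigma_Z$ positive definite. *)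

theory Defs
  imports "HOL-Probability.Probability"
begin

text \<open>Population quantities for one draw (Y, D, Z) from the probability space M.
  Instruments are indexed by a finite type 'l; Z \<omega> l is Z_l.\<close>

definition cexp :: "'a measure \<Rightarrow> ('a \<Rightarrow> real) \<Rightarrow> 'a set \<Rightarrow> real" where
  "cexp M X A = (\<integral>\<omega>. indicator A \<omega> * X \<omega> \<partial>M) / measure M A"

definition evZ :: "'a measure \<Rightarrow> ('a \<Rightarrow> 'l \<Rightarrow> bool) \<Rightarrow> 'l \<Rightarrow> bool \<Rightarrow> 'a set" where
  "evZ M Z l z = {\<omega> \<in> space M. Z \<omega> l = z}"

definition cdiff :: "'a measure \<Rightarrow> ('a \<Rightarrow> 'l \<Rightarrow> bool) \<Rightarrow> ('a \<Rightarrow> real) \<Rightarrow> 'l \<Rightarrow> real" where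
  "cdiff M Z X l = cexp M X (evZ M Z l True) - cexp M X (evZ M Z l False)"

definition pZ :: "'a measure \<Rightarrow> ('a \<Rightarrow> 'l \<Rightarrow> bool) \<Rightarrow> 'l \<Rightarrow> real" where
  "pZ M Z l = measure M (evZ M Z l True)"

definition piIV :: "'a measure \<Rightarrow> ('a \<Rightarrow> bool) \<Rightarrow> ('a \<Rightarrow> 'l \<Rightarrow> bool) \<Rightarrow> 'l \<Rightarrow> real" where
  "piIV M D Z l = cdiff M Z (\<lambda>\<omega>. of_bool (D \<omega>)) l"

definition rhoIV :: "'a measure \<Rightarrow> ('a \<Rightarrow> real) \<Rightarrow> ('a \<Rightarrow> 'l \<Rightarrow> bool) \<Rightarrow> 'l \<Rightarrow> real" where
  "rhoIV M Y Z l = cdiff M Z Y l"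

definition Wald :: "'a measure \<Rightarrow> ('a \<Rightarrow> real) \<Rightarrow> ('a \<Rightarrow> bool) \<Rightarrow> ('a \<Rightarrow> 'l \<Rightarrow> bool) \<Rightarrow> 'l \<Rightarrow> real" where
  "Wald M Y D Z l = rhoIV M Y Z l / piIV M D Z l"

definition gammaIV :: "'a measure \<Rightarrow> ('a \<Rightarrow> bool) \<Rightarrow> ('a \<Rightarrow> 'l \<Rightarrow> bool) \<Rightarrow> 'l \<Rightarrow> real" where
  "gammaIV M D Z l =
     (\<integral>\<omega>. of_bool (D \<omega>) * of_bool (Z \<omega> l) \<partial>M) - (\<integral>\<omega>. of_bool (D \<omega>) \<partial>M) * pZ M Z l"

definition SigmaZ :: "'a measure \<Rightarrow> ('a \<Rightarrow> 'l \<Rightarrow> bool) \<Rightarrow> 'l \<Rightarrow> 'l \<Rightarrow> real" where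
  "SigmaZ M Z l k = (\<integral>\<omega>. of_bool (Z \<omega> l) * of_bool (Z \<omega> k) \<partial>M) - pZ M Z l * pZ M Z k"

definition epsW :: "'a measure \<Rightarrow> ('a \<Rightarrow> real) \<Rightarrow> ('a \<Rightarrow> bool) \<Rightarrow> ('a \<Rightarrow> 'l \<Rightarrow> bool) \<Rightarrow> 'l \<Rightarrow> 'a \<Rightarrow> real" where
  "epsW M Y D Z l \<omega> = Y \<omega> - Wald M Y D Z l * of_bool (D \<omega>)
     - ((\<integral>\<omega>'. Y \<omega>' \<partial>M) - Wald M Y D Z l * (\<integral>\<omega>'. of_bool (D \<omega>') \<partial>M))"

definition GammaWald :: "'a measure \<Rightarrow> ('a \<Rightarrow> real) \<Rightarrow> ('a \<Rightarrow> bool) \<Rightarrow> ('a \<Rightarrow> 'l \<Rightarrow> bool) \<Rightarrow> 'l \<Rightarrow> 'l \<Rightarrow> real" where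
  "GammaWald M Y D Z l k =
     (\<integral>\<omega>. epsW M Y D Z l \<omega> * epsW M Y D Z k \<omega>
          * (of_bool (Z \<omega> l) - pZ M Z l) * (of_bool (Z \<omega> k) - pZ M Z k) \<partial>M)
     / (gammaIV M D Z l * gammaIV M D Z k)"

definition posdef :: "('l::finite \<Rightarrow> 'l \<Rightarrow> real) \<Rightarrow> bool" where
  "posdef G \<longleftrightarrow> (\<forall>x::'l \<Rightarrow> real. (\<exists>l. x l \<noteq> 0) \<longrightarrow> (\<Sum>l\<in>UNIV. \<Sum>k\<in>UNIV. x l * G l k * x k) > 0)"

definition quadform :: "('l::finite \<Rightarrow> 'l \<Rightarrow> real) \<Rightarrow> ('l \<Rightarrow> real) \<Rightarrow> real" where
  "quadform G x = (\<Sum>l\<in>UNIV. \<Sum>k\<in>UNIV. x l * G l k * x k)"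

definition hfun :: "'a measure \<Rightarrow> ('a \<Rightarrow> 'l \<Rightarrow> bool) \<Rightarrow> (('l \<Rightarrow> bool) \<Rightarrow> real) \<Rightarrow> 'l \<Rightarrow> real \<Rightarrow> real" where
  "hfun M Z p l u = cdiff M Z (\<lambda>\<omega>. of_bool (p (Z \<omega>) \<ge> u)) l / cdiff M Z (\<lambda>\<omega>. p (Z \<omega>)) l"

definition hbar :: "'a measure \<Rightarrow> ('a \<Rightarrow> 'l::finite \<Rightarrow> bool) \<Rightarrow> (('l \<Rightarrow> bool) \<Rightarrow> real) \<Rightarrow> ('l \<Rightarrow> real) \<Rightarrow> real \<Rightarrow> real" where
  "hbar M Z p w u = (\<Sum>l\<in>UNIV. w l * hfun M Z p l u)"

text \<open>Policy weights: Q0, Q1 are the distributions of the propensity score under policies 0 and 1;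
  F_j(u) = P(p(Z) \<ge> u | policy j).\<close>
definition Fpol :: "real measure \<Rightarrow> real \<Rightarrow> real" where
  "Fpol Q u = measure Q {u..}"

definition wP :: "real measure \<Rightarrow> real measure \<Rightarrow> real \<Rightarrow> real" where
  "wP Q0 Q1 u = (Fpol Q0 u - Fpol Q1 u) / (LINT s:{0..1}|lborel. Fpol Q0 s - Fpol Q1 s)"

definition prob_simplex :: "('l::finite \<Rightarrow> real) set" where
  "prob_simplex = {w. (\<forall>l. 0 \<le> w l) \<and> (\<Sum>l\<in>UNIV. w l) = 1}"

definition fitloss :: "'a measure \<Rightarrow> ('a \<Rightarrow> 'l::finite \<Rightarrow> bool) \<Rightarrow> (('l \<Rightarrow> bool) \<Rightarrow> real)
    \<Rightarrow> real measure \<Rightarrow> real measure \<Rightarrow> ('l \<Rightarrow> real) \<Rightarrow> real" where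
  "fitloss M Z p Q0 Q1 w = (LINT u:{0..1}|lborel. (hbar M Z p w u - wP Q0 Q1 u)\<^sup>2)"

definition Sset :: "'a measure \<Rightarrow> ('a \<Rightarrow> 'l::finite \<Rightarrow> bool) \<Rightarrow> (('l \<Rightarrow> bool) \<Rightarrow> real)
    \<Rightarrow> real measure \<Rightarrow> real measure \<Rightarrow> ('l \<Rightarrow> real) set" where
  "Sset M Z p Q0 Q1 = {w \<in> prob_simplex. \<forall>w'\<in>prob_simplex. fitloss M Z p Q0 Q1 w \<le> fitloss M Z p Q0 Q1 w'}"

text \<open>Independence of two random variables with possibly different codomains
  (the library's indep_var requires a common codomain type).\<close>
definition indep2 :: "'a measure \<Rightarrow> 'b measure \<Rightarrow> ('a \<Rightarrow> 'b) \<Rightarrow> 'c measure \<Rightarrow> ('a \<Rightarrow> 'c) \<Rightarrow> bool" where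
  "indep2 M MA X MB W \<longleftrightarrow>
     X \<in> measurable M MA \<and> W \<in> measurable M MB \<and>
     (\<forall>A\<in>sets MA. \<forall>B\<in>sets MB.
        measure M (X -` A \<inter> W -` B \<inter> space M) = measure M (X -` A \<inter> space M) * measure M (W -` B \<inter> space M))"

end

theory Submission
  imports Defs
begin

lemma mid_sq: fixes x y g :: real shows "((x + y) / 2 - g)\<^sup>2 \<le> ((x - g)\<^sup>2 + (y - g)\<^sup>2) / 2"
proof -
  have "0 \<le> (x - y)\<^sup>2" by simp
  then show ?thesis by (simp add: power2_eq_square field_simps)
qed


lemma cont_coord [continuous_intros]:
  "continuous_on S f \<Longrightarrow> continuous_on S (\<lambda>x. f x i)"
  by (rule continuous_on_product_then_coordinatewise)

lemma compact_simplex: "compact (prob_simplex :: ('l::finite \<Rightarrow> real) set)"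
proof -
  have c1: "compact (PiE UNIV (\<lambda>_::'l. {0..1::real}))"
    using compactin_PiE[of "\<lambda>_::'l. euclidean" UNIV "\<lambda>_. {0..1::real}"]
    by (simp add: euclidean_product_topology)
  have c2: "closed {w::'l \<Rightarrow> real. (\<Sum>l\<in>UNIV. w l) = 1}"
    by (intro closed_Collect_eq continuous_intros continuous_on_id)
  have "prob_simplex = PiE UNIV (\<lambda>_::'l. {0..1::real}) \<inter> {w. (\<Sum>l\<in>UNIV. w l) = 1}"
  proof (auto simp: prob_simplex_def PiE_UNIV_domain)
    fix w :: "'l \<Rightarrow> real" and l assume "\<forall>l. 0 \<le> w l" "sum w UNIV = 1"
    then show "w l \<le> 1" using member_le_sum[of l UNIV w] by auto
  qed
  then show ?thesis using compact_Int_closed[OF c1 c2] by simp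
qed

lemma simplex_nonempty: "(prob_simplex :: ('l::finite \<Rightarrow> real) set) \<noteq> {}"
proof -
  have "(\<lambda>_::'l. 1 / real CARD('l)) \<in> prob_simplex" by (simp add: prob_simplex_def)
  then show ?thesis by blast
qed

lemma simplex_mid: "a \<in> prob_simplex \<Longrightarrow> b \<in> prob_simplex \<Longrightarrow> (\<lambda>l. (a l + b l) / 2) \<in> prob_simplex"
  by (auto simp: prob_simplex_def sum.distrib sum_divide_distrib[symmetric] add_nonneg_nonneg)

lemma quad_cont: "continuous_on UNIV (quadform G)"
  unfolding quadform_def by (intro continuous_intros continuous_on_id)

lemma quad_mid:
  fixes G :: "'l::finite \<Rightarrow> 'l \<Rightarrow> real"
  shows "quadform G a + quadform G b - 2 * quadform G (\<lambda>l. (a l + b l) / 2)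
    = quadform G (\<lambda>l. a l - b l) / 2"
proof -
  have "quadform G a + quadform G b - 2 * quadform G (\<lambda>l. (a l + b l) / 2)
     = (\<Sum>l\<in>UNIV. \<Sum>k\<in>UNIV. a l * G l k * a k + b l * G l k * b k - 2 * ((a l + b l) / 2 * G l k * ((a k + b k) / 2)))"
    unfolding quadform_def by (simp add: sum.distrib sum_subtractf sum_distrib_left)
  also have "\<dots> = (\<Sum>l\<in>UNIV. \<Sum>k\<in>UNIV. (a l - b l) * G l k * (a k - b k) / 2)"
    by (intro sum.cong refl) (simp add: field_simps)
  also have "\<dots> = quadform G (\<lambda>l. a l - b l) / 2"
    unfolding quadform_def by (simp add: sum_divide_distrib)
  finally show ?thesis .
qed

lemma abstract_unique:
  fixes F :: "('l::finite \<Rightarrow> real) \<Rightarrow> real" and G :: "'l \<Rightarrow> 'l \<Rightarrow> real"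
  assumes Fc: "continuous_on UNIV F"
    and Fm: "\<And>a b. F (\<lambda>l. (a l + b l) / 2) \<le> (F a + F b) / 2"
    and G: "posdef G"
  shows "\<exists>!w. w \<in> {w \<in> prob_simplex. \<forall>w'\<in>prob_simplex. F w \<le> F w'} \<and>
          (\<forall>w'\<in>{w \<in> prob_simplex. \<forall>w'\<in>prob_simplex. F w \<le> F w'}. quadform G w \<le> quadform G w')"
proof -
  define S where "S = {w \<in> prob_simplex. \<forall>w'\<in>prob_simplex. F w \<le> F w'}"
  obtain w0 where w0: "w0 \<in> prob_simplex" "\<forall>y\<in>prob_simplex. F w0 \<le> F y"
    using continuous_attains_inf[OF compact_simplex simplex_nonempty continuous_on_subset[OF Fc]] by blast
  have S_eq: "S = prob_simplex \<inter> {w. F w \<le> F w0}"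
    using w0 unfolding S_def by (auto intro: order_trans)
  have "closed {w. F w \<le> F w0}"
    by (intro closed_Collect_le Fc continuous_on_const)
  then have Sc: "compact S" unfolding S_eq by (intro compact_Int_closed compact_simplex)
  have Sne: "S \<noteq> {}" using w0 unfolding S_eq by auto
  obtain a where a: "a \<in> S" "\<forall>y\<in>S. quadform G a \<le> quadform G y"
    using continuous_attains_inf[OF Sc Sne continuous_on_subset[OF quad_cont]] by blast
  have uniq: "b = a" if b: "b \<in> S" "\<forall>y\<in>S. quadform G b \<le> quadform G y" for b
  proof (rule ccontr)
    assume ne: "b \<noteq> a"
    define c where "c = (\<lambda>l. (a l + b l) / 2)"
    have cS: "c \<in> S"
    proof -
      have "c \<in> prob_simplex" unfolding c_def using a b by (auto simp: S_eq intro: simplex_mid)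
      moreover have "F c \<le> F w0" using Fm[of a b] a b unfolding c_def S_eq by auto
      ultimately show ?thesis unfolding S_eq by auto
    qed
    have qab: "quadform G a = quadform G b" using a b by (meson order_antisym)
    obtain l where l: "a l - b l \<noteq> 0" using ne by (metis eq_iff_diff_eq_0 ext)
    have Gall: "\<forall>x::'l\<Rightarrow>real. (\<exists>l. x l \<noteq> 0) \<longrightarrow> quadform G x > 0"
      using G unfolding posdef_def quadform_def .
    have ex: "\<exists>l'. a l' - b l' \<noteq> 0" using l by blast
    have "quadform G (\<lambda>l. a l - b l) > 0" using spec[OF Gall, of "\<lambda>l. a l - b l"] ex by simp
    then have "quadform G c < quadform G a" using quad_mid[of G a b] qab unfolding c_def by linarith
    then show False using a cS by force
  qed
  show ?thesis unfolding S_def[symmetric] using a uniq by blast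
qed




definition bm :: "(real \<Rightarrow> real) \<Rightarrow> bool" where
  "bm f \<longleftrightarrow> f \<in> borel_measurable borel \<and> (\<exists>B. \<forall>u. \<bar>f u\<bar> \<le> B)"

lemma bm_mult: "bm f \<Longrightarrow> bm g \<Longrightarrow> bm (\<lambda>u. f u * g u)"
proof -
  assume f: "bm f" and g: "bm g"
  then obtain B1 B2 where b1: "\<forall>u. \<bar>f u\<bar> \<le> B1" and b2: "\<forall>u. \<bar>g u\<bar> \<le> B2" by (auto simp: bm_def)
  have "\<bar>f u * g u\<bar> \<le> B1 * B2" for u
    unfolding abs_mult using b1 b2 by (intro mult_mono) (auto intro: order_trans)
  then show ?thesis using f g by (auto simp: bm_def)
qed

lemma bm_add: "bm f \<Longrightarrow> bm g \<Longrightarrow> bm (\<lambda>u. f u + g u)"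
proof -
  assume f: "bm f" and g: "bm g"
  then obtain B1 B2 where b1: "\<forall>u. \<bar>f u\<bar> \<le> B1" and b2: "\<forall>u. \<bar>g u\<bar> \<le> B2" by (auto simp: bm_def)
  have "\<bar>f u + g u\<bar> \<le> B1 + B2" for u using b1 b2 abs_triangle_ineq[of "f u" "g u"] by (meson add_mono order_trans)
  then show ?thesis using f g by (auto simp: bm_def)
qed

lemma bm_const: "bm (\<lambda>u. c)"
  by (auto simp: bm_def)

lemma bm_cmult: "bm f \<Longrightarrow> bm (\<lambda>u. c * f u)"
  using bm_mult[OF bm_const] .

lemma bm_diff: "bm f \<Longrightarrow> bm g \<Longrightarrow> bm (\<lambda>u. f u - g u)"
  using bm_add[of f "\<lambda>u. (-1) * g u"] bm_cmult[of g "-1"] by simp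

lemma bm_sum: "finite A \<Longrightarrow> (\<And>i. i \<in> A \<Longrightarrow> bm (f i)) \<Longrightarrow> bm (\<lambda>u. \<Sum>i\<in>A. f i u)"
  by (induction A rule: finite_induct) (auto intro: bm_add bm_const)

lemma bm_sumU: "(\<And>i. bm (f i)) \<Longrightarrow> bm (\<lambda>u. \<Sum>i\<in>(UNIV::'i::finite set). f i u)"
  by (rule bm_sum) auto

lemma bm_si: "bm f \<Longrightarrow> set_integrable lborel {0..1::real} f"
proof -
  assume f: "bm f"
  then obtain B where b: "\<forall>u. \<bar>f u\<bar> \<le> B" and m: "f \<in> borel_measurable borel" by (auto simp: bm_def)
  show ?thesis unfolding set_integrable_def
    by (rule integrableI_bounded_set_indicator[where B=B]) (use b m in auto)
qed

lemma si_sum: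
  "finite A \<Longrightarrow> (\<And>i. i \<in> A \<Longrightarrow> set_integrable M S (f i)) \<Longrightarrow>
   (LINT x:S|M. (\<Sum>i\<in>A. f i x)) = (\<Sum>i\<in>A. (LINT x:S|M. f i x :: real))"
  unfolding set_lebesgue_integral_def set_integrable_def scaleR_sum_right
  by (subst Bochner_Integration.integral_sum) auto

lemma fit_expand:
  fixes h :: "'l::finite \<Rightarrow> real \<Rightarrow> real"
  assumes h: "\<And>l. bm (h l)" and g: "bm g"
  shows "(LINT u:{0..1}|lborel. ((\<Sum>l\<in>UNIV. w l * h l u) - g u)\<^sup>2)
    = (\<Sum>l\<in>UNIV. \<Sum>k\<in>UNIV. w l * w k * (LINT u:{0..1}|lborel. h l u * h k u))
      - 2 * (\<Sum>l\<in>UNIV. w l * (LINT u:{0..1}|lborel. h l u * g u))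
      + (LINT u:{0..1}|lborel. g u * g u)"
proof -
  have pw: "((\<Sum>l\<in>UNIV. w l * h l u) - g u)\<^sup>2 =
      (\<Sum>l\<in>UNIV. \<Sum>k\<in>UNIV. w l * w k * (h l u * h k u))
      - 2 * (\<Sum>l\<in>UNIV. w l * (h l u * g u)) + g u * g u" for u
  proof -
    have "((\<Sum>l\<in>UNIV. w l * h l u) - g u)\<^sup>2 = (\<Sum>l\<in>UNIV. w l * h l u) * (\<Sum>k\<in>UNIV. w k * h k u)
        - 2 * ((\<Sum>l\<in>UNIV. w l * h l u) * g u) + g u * g u"
      by (simp add: power2_eq_square algebra_simps)
    also have "(\<Sum>l\<in>UNIV. w l * h l u) * (\<Sum>k\<in>UNIV. w k * h k u) = (\<Sum>l\<in>UNIV. \<Sum>k\<in>UNIV. w l * w k * (h l u * h k u))"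
      by (simp add: sum_product algebra_simps)
    also have "(\<Sum>l\<in>UNIV. w l * h l u) * g u = (\<Sum>l\<in>UNIV. w l * (h l u * g u))"
      by (subst sum_distrib_right) (simp add: algebra_simps)
    finally show ?thesis .
  qed
  have bA: "bm (\<lambda>u. \<Sum>l\<in>UNIV. \<Sum>k\<in>UNIV. w l * w k * (h l u * h k u))"
    by (intro bm_sumU bm_cmult bm_mult h bm_const)
  have bB: "bm (\<lambda>u. 2 * (\<Sum>l\<in>UNIV. w l * (h l u * g u)))"
    by (intro bm_sumU bm_cmult bm_mult h g bm_const)
  have bC: "bm (\<lambda>u. g u * g u)" by (intro bm_mult g)
  have "(LINT u:{0..1}|lborel. ((\<Sum>l\<in>UNIV. w l * h l u) - g u)\<^sup>2)
     = (LINT u:{0..1}|lborel. (\<Sum>l\<in>UNIV. \<Sum>k\<in>UNIV. w l * w k * (h l u * h k u))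
      - 2 * (\<Sum>l\<in>UNIV. w l * (h l u * g u)) + g u * g u)"
    by (simp only: pw)
  also have "\<dots> = (LINT u:{0..1}|lborel. (\<Sum>l\<in>UNIV. \<Sum>k\<in>UNIV. w l * w k * (h l u * h k u)))
      - (LINT u:{0..1}|lborel. 2 * (\<Sum>l\<in>UNIV. w l * (h l u * g u))) + (LINT u:{0..1}|lborel. g u * g u)"
    using bm_si[OF bA] bm_si[OF bB] bm_si[OF bC] bm_si[OF bm_diff[OF bA bB]]
    by (simp add: set_integral_add set_integral_diff)
  also have "(LINT u:{0..1}|lborel. (\<Sum>l\<in>UNIV. \<Sum>k\<in>UNIV. w l * w k * (h l u * h k u)))
      = (\<Sum>l\<in>UNIV. \<Sum>k\<in>UNIV. w l * w k * (LINT u:{0..1}|lborel. h l u * h k u))"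
    apply (subst si_sum)
      apply simp
     apply (intro bm_si bm_sumU bm_cmult bm_mult h bm_const)
    apply (intro sum.cong refl)
    apply (subst si_sum)
      apply simp
     apply (intro bm_si bm_sumU bm_cmult bm_mult h bm_const)
    apply simp
    done
  also have "(LINT u:{0..1}|lborel. 2 * (\<Sum>l\<in>UNIV. w l * (h l u * g u)))
      = 2 * (\<Sum>l\<in>UNIV. w l * (LINT u:{0..1}|lborel. h l u * g u))"
    apply (subst set_integral_mult_right)
    apply (subst si_sum)
      apply simp
     apply (intro bm_si bm_sumU bm_cmult bm_mult h g bm_const)
    apply simp
    done
  finally show ?thesis .
qed

lemma fit_cont:
  fixes h :: "'l::finite \<Rightarrow> real \<Rightarrow> real"
  assumes h: "\<And>l. bm (h l)" and g: "bm g"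
  shows "continuous_on UNIV (\<lambda>w. LINT u:{0..1}|lborel. ((\<Sum>l\<in>UNIV. w l * h l u) - g u)\<^sup>2)"
  unfolding fit_expand[OF h g] by (intro continuous_intros continuous_on_id)

lemma fit_mid:
  fixes h :: "'l::finite \<Rightarrow> real \<Rightarrow> real"
  assumes h: "\<And>l. bm (h l)" and g: "bm g"
  defines "F \<equiv> (\<lambda>w. LINT u:{0..1}|lborel. ((\<Sum>l\<in>UNIV. w l * h l u) - g u)\<^sup>2)"
  shows "F (\<lambda>l. (a l + b l) / 2) \<le> (F a + F b) / 2"
proof -
  have bw: "bm (\<lambda>u. ((\<Sum>l\<in>UNIV. w l * h l u) - g u)\<^sup>2)" for w
    unfolding power2_eq_square by (intro bm_mult bm_diff bm_sumU bm_cmult h g bm_const)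
  have pw: "((\<Sum>l\<in>UNIV. (a l + b l) / 2 * h l u) - g u)\<^sup>2 \<le>
      (((\<Sum>l\<in>UNIV. a l * h l u) - g u)\<^sup>2 + ((\<Sum>l\<in>UNIV. b l * h l u) - g u)\<^sup>2) / 2" for u
  proof -
    have e: "(\<Sum>l\<in>UNIV. (a l + b l) / 2 * h l u) = ((\<Sum>l\<in>UNIV. a l * h l u) + (\<Sum>l\<in>UNIV. b l * h l u)) / 2"
      by (simp add: sum.distrib sum_divide_distrib[symmetric] algebra_simps add_divide_distrib)
    show ?thesis unfolding e by (rule mid_sq)
  qed
  have b2: "bm (\<lambda>u. (1/2) * (((\<Sum>l\<in>UNIV. a l * h l u) - g u)\<^sup>2 + ((\<Sum>l\<in>UNIV. b l * h l u) - g u)\<^sup>2))"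
    by (intro bm_cmult bm_add bw)
  have pw2: "((\<Sum>l\<in>UNIV. (a l + b l) / 2 * h l u) - g u)\<^sup>2 \<le>
      (1/2) * (((\<Sum>l\<in>UNIV. a l * h l u) - g u)\<^sup>2 + ((\<Sum>l\<in>UNIV. b l * h l u) - g u)\<^sup>2)" for u
    using pw[of u] by simp
  have "F (\<lambda>l. (a l + b l) / 2) \<le> (LINT u:{0..1}|lborel.
      (1/2) * (((\<Sum>l\<in>UNIV. a l * h l u) - g u)\<^sup>2 + ((\<Sum>l\<in>UNIV. b l * h l u) - g u)\<^sup>2))"
    unfolding F_def
    by (rule set_integral_mono[OF bm_si[OF bw] bm_si[OF b2]]) (rule pw2)
  also have "\<dots> = (1/2) * ((LINT u:{0..1}|lborel. ((\<Sum>l\<in>UNIV. a l * h l u) - g u)\<^sup>2)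
       + (LINT u:{0..1}|lborel. ((\<Sum>l\<in>UNIV. b l * h l u) - g u)\<^sup>2))"
    by (simp only: set_integral_mult_right set_integral_add(2)[OF bm_si[OF bw[of a]] bm_si[OF bw[of b]]])
  also have "\<dots> = (F a + F b) / 2"
    unfolding F_def by simp
  finally show ?thesis .
qed



lemma jm: fixes Z :: "'a \<Rightarrow> 'l \<Rightarrow> bool" and p :: "('l \<Rightarrow> bool) \<Rightarrow> real"
  assumes A: "A \<in> sets M" and measZ: "Z \<in> measurable M (count_space UNIV)"
  shows "(\<lambda>(u, \<omega>). indicator A \<omega> * of_bool (p (Z \<omega>) \<ge> u) :: real) \<in> borel_measurable (borel \<Otimes>\<^sub>M M)"
proof -
  have pZ: "(\<lambda>\<omega>. p (Z \<omega>)) \<in> borel_measurable M"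
    using measurable_compose[OF measZ, of p borel] by simp
  have m1[measurable]: "(\<lambda>x. p (Z (snd x))) \<in> borel_measurable (borel \<Otimes>\<^sub>M M)"
    by (rule measurable_compose[OF measurable_snd pZ])
  have m2[measurable]: "(\<lambda>x. indicator A (snd x) :: real) \<in> borel_measurable (borel \<Otimes>\<^sub>M M)"
    by (rule measurable_compose[OF measurable_snd borel_measurable_indicator[OF A]])
  have m3[measurable]: "Measurable.pred (borel \<Otimes>\<^sub>M M) (\<lambda>x. fst x \<le> p (Z (snd x)))"
    by measurable
  have m4: "(\<lambda>x. of_bool (fst x \<le> p (Z (snd x))) :: real) \<in> borel_measurable (borel \<Otimes>\<^sub>M M)"
    by (rule measurable_compose[OF m3 measurable_of_bool])
  have "(\<lambda>x. indicator A (snd x) * of_bool (fst x \<le> p (Z (snd x))) :: real) \<in> borel_measurable (borel \<Otimes>\<^sub>M M)"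
    using borel_measurable_times[OF m2 m4] by simp
  moreover have "(\<lambda>(u, \<omega>). indicator A \<omega> * of_bool (p (Z \<omega>) \<ge> u)) = (\<lambda>x. indicator A (snd x) * of_bool (fst x \<le> p (Z (snd x))) :: real)"
    by (auto simp: fun_eq_iff)
  ultimately show ?thesis by simp
qed

lemma cexp_bm:
  fixes Z :: "'a \<Rightarrow> 'l \<Rightarrow> bool" and p :: "('l \<Rightarrow> bool) \<Rightarrow> real"
  assumes P: "prob_space M" and A: "A \<in> sets M" and measZ: "Z \<in> measurable M (count_space UNIV)"
  shows "bm (\<lambda>u. cexp M (\<lambda>\<omega>. of_bool (p (Z \<omega>) \<ge> u)) A)"
proof -
  interpret prob_space M by (rule P)
  have pZ[measurable]: "(\<lambda>\<omega>. p (Z \<omega>)) \<in> borel_measurable M"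
    using measurable_compose[OF measZ, of p borel] by simp
  note A[measurable]
  have jm: "(\<lambda>(u, \<omega>). indicator A \<omega> * of_bool (p (Z \<omega>) \<ge> u) :: real) \<in> borel_measurable (borel \<Otimes>\<^sub>M M)"
    by (rule jm[OF A measZ])
  have m1: "(\<lambda>u. \<integral>\<omega>. (indicator A \<omega> * of_bool (p (Z \<omega>) \<ge> u) :: real) \<partial>M) \<in> borel_measurable borel"
    apply (rule borel_measurable_lebesgue_integral[where f="\<lambda>u \<omega>. indicator A \<omega> * of_bool (p (Z \<omega>) \<ge> u) :: real" and N=borel])
    using jm by simp
  have meas: "(\<lambda>u. cexp M (\<lambda>\<omega>. of_bool (p (Z \<omega>) \<ge> u)) A) \<in> borel_measurable borel"
    unfolding cexp_def using m1 by measurable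
  have bnd: "\<bar>cexp M (\<lambda>\<omega>. of_bool (p (Z \<omega>) \<ge> u)) A\<bar> \<le> 1" for u
  proof -
    define I where "I = (\<integral>\<omega>. (indicator A \<omega> * of_bool (p (Z \<omega>) \<ge> u) :: real) \<partial>M)"
    have int1: "integrable M (\<lambda>\<omega>. indicator A \<omega> * of_bool (p (Z \<omega>) \<ge> u) :: real)"
      by (rule integrable_const_bound[where B=1]) (auto simp: indicator_def)
    have int2: "integrable M (\<lambda>\<omega>. indicator A \<omega> :: real)"
      by (rule integrable_const_bound[where B=1]) (auto simp: indicator_def)
    have "0 \<le> I" unfolding I_def by (intro Bochner_Integration.integral_nonneg) (auto simp: indicator_def)
    moreover have "I \<le> (\<integral>\<omega>. indicator A \<omega> \<partial>M)"
      unfolding I_def by (rule Bochner_Integration.integral_mono[OF int1 int2]) (auto simp: indicator_def)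
    moreover have "(\<integral>\<omega>. indicator A \<omega> \<partial>M) = measure M A"
      using A sets.sets_into_space by (simp add: Int_absorb2)
    ultimately have "0 \<le> I" "I \<le> measure M A" by auto
    then have "\<bar>I / measure M A\<bar> \<le> 1"
      by (cases "measure M A = 0") (auto simp: divide_le_eq_1 abs_div_pos measure_nonneg)
    then show ?thesis unfolding cexp_def I_def .
  qed
  show ?thesis unfolding bm_def using meas bnd by blast
qed

lemma hfun_bm:
  fixes Z :: "'a \<Rightarrow> 'l \<Rightarrow> bool" and p :: "('l \<Rightarrow> bool) \<Rightarrow> real"
  assumes P: "prob_space M" and measZ: "Z \<in> measurable M (count_space UNIV)"
  shows "bm (hfun M Z p l)"
proof -
  have ev: "evZ M Z l z \<in> sets M" for z
  proof -
    have "(\<lambda>\<omega>. Z \<omega> l) \<in> measurable M (count_space UNIV)"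
      using measurable_compose[OF measZ, of "\<lambda>f. f l" "count_space UNIV"] by simp
    then have "(\<lambda>\<omega>. Z \<omega> l) -` {z} \<inter> space M \<in> sets M" by (rule measurable_sets) simp
    moreover have "(\<lambda>\<omega>. Z \<omega> l) -` {z} \<inter> space M = evZ M Z l z" by (auto simp: evZ_def)
    ultimately show ?thesis by simp
  qed
  have "bm (\<lambda>u. (1 / cdiff M Z (\<lambda>\<omega>. p (Z \<omega>)) l) *
     (cexp M (\<lambda>\<omega>. of_bool (p (Z \<omega>) \<ge> u)) (evZ M Z l True) - cexp M (\<lambda>\<omega>. of_bool (p (Z \<omega>) \<ge> u)) (evZ M Z l False)))"
    by (intro bm_cmult bm_diff cexp_bm[OF P ev measZ])
  moreover have "hfun M Z p l = (\<lambda>u. (1 / cdiff M Z (\<lambda>\<omega>. p (Z \<omega>)) l) *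
     (cexp M (\<lambda>\<omega>. of_bool (p (Z \<omega>) \<ge> u)) (evZ M Z l True) - cexp M (\<lambda>\<omega>. of_bool (p (Z \<omega>) \<ge> u)) (evZ M Z l False)))"
    by (rule ext) (simp add: hfun_def cdiff_def)
  ultimately show ?thesis by simp
qed

lemma Fpol_bm:
  assumes "prob_space Q" "sets Q = sets borel"
  shows "bm (Fpol Q)"
proof -
  interpret prob_space Q by fact
  have sets: "{u..} \<in> sets Q" for u :: real using assms(2) by simp
  have "mono (\<lambda>u. - Fpol Q u)"
  proof (rule monoI)
    fix u v :: real assume "u \<le> v"
    then have "measure Q {v..} \<le> measure Q {u..}" by (intro finite_measure_mono sets) auto
    then show "- Fpol Q u \<le> - Fpol Q v" by (simp add: Fpol_def)
  qed
  then have "(\<lambda>u. - Fpol Q u) \<in> borel_measurable borel" by (rule borel_measurable_mono)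
  then have "(\<lambda>u. - (- Fpol Q u)) \<in> borel_measurable borel" by measurable
  then have m: "Fpol Q \<in> borel_measurable borel" by simp
  have "\<bar>Fpol Q u\<bar> \<le> 1" for u by (simp add: Fpol_def)
  then show ?thesis using m unfolding bm_def by blast
qed

lemma wP_bm:
  assumes "prob_space Q0" "sets Q0 = sets borel" "prob_space Q1" "sets Q1 = sets borel"
  shows "bm (wP Q0 Q1)"
proof -
  have "bm (\<lambda>u. (1 / (LINT s:{0..1}|lborel. Fpol Q0 s - Fpol Q1 s)) * (Fpol Q0 u - Fpol Q1 u))"
    by (intro bm_cmult bm_diff Fpol_bm assms)
  moreover have "wP Q0 Q1 = (\<lambda>u. (1 / (LINT s:{0..1}|lborel. Fpol Q0 s - Fpol Q1 s)) * (Fpol Q0 u - Fpol Q1 u))"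
    by (rule ext) (simp add: wP_def)
  ultimately show ?thesis by simp
qed

theorem proposition15:
  fixes M :: "'a measure"
    and Y Y0 Y1 U :: "'a \<Rightarrow> real"
    and D :: "'a \<Rightarrow> bool"
    and Z :: "'a \<Rightarrow> 'l::finite \<Rightarrow> bool"
    and Dfun :: "'a \<Rightarrow> ('l \<Rightarrow> bool) \<Rightarrow> bool"
    and V :: "('l \<Rightarrow> bool) \<Rightarrow> real"
    and Q0 Q1 :: "real measure"
  assumes L2: "CARD('l) \<ge> 2"
    and P: "prob_space M"
    and measZ: "Z \<in> measurable M (count_space UNIV)"
    and measDfun: "Dfun \<in> measurable M (count_space UNIV)"
    and measD: "D \<in> measurable M (count_space UNIV)"
    and measY: "Y \<in> borel_measurable M" "Y0 \<in> borel_measurable M" "Y1 \<in> borel_measurable M"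
    and measU: "U \<in> borel_measurable M"
    and Dobs: "\<forall>\<omega>\<in>space M. D \<omega> = Dfun \<omega> (Z \<omega>)"
    and Yobs: "\<forall>\<omega>\<in>space M. Y \<omega> = (if D \<omega> then Y1 \<omega> else Y0 \<omega>)"
    and A1: "indep2 M
               (borel \<Otimes>\<^sub>M borel \<Otimes>\<^sub>M count_space UNIV) (\<lambda>\<omega>. (Y0 \<omega>, Y1 \<omega>, Dfun \<omega>))
               (count_space UNIV) Z"
    and A2: "\<forall>\<omega>\<in>space M. mono (Dfun \<omega>)"
    and A3p: "\<forall>l. pZ M Z l > 0"
    and A3pi: "\<forall>l. piIV M D Z l > 0"
    and A3Sigma: "posdef (SigmaZ M Z)"
    and LI_index: "\<forall>\<omega>\<in>space M. \<forall>z. Dfun \<omega> z = (V z \<ge> U \<omega>)"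
    and LI_unif: "distr M lborel U = uniform_measure lborel {0..1}"
    and LI_indep: "indep2 M borel U (borel \<Otimes>\<^sub>M borel) (\<lambda>\<omega>. (Y0 \<omega>, Y1 \<omega>))"
    and LI_pscore: "\<forall>z. measure M {\<omega>\<in>space M. Z \<omega> = z} > 0 \<longrightarrow>
                      V z = cexp M (\<lambda>\<omega>. of_bool (D \<omega>)) {\<omega>\<in>space M. Z \<omega> = z}"
    and Gamma_pd: "posdef (GammaWald M Y D Z)"
    and Q0: "prob_space Q0" "sets Q0 = sets borel"
    and Q1: "prob_space Q1" "sets Q1 = sets borel"
    and policy_nz: "(LINT s:{0..1}|lborel. Fpol Q0 s - Fpol Q1 s) \<noteq> 0"
  shows "\<exists>!w. w \<in> Sset M Z V Q0 Q1 \<and>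
              (\<forall>w'\<in>Sset M Z V Q0 Q1. quadform (GammaWald M Y D Z) w \<le> quadform (GammaWald M Y D Z) w')"
  proof -
  have h: "\<And>l. bm (hfun M Z V l)" using hfun_bm[OF P measZ] .
  have g: "bm (wP Q0 Q1)" using wP_bm[OF Q0 Q1] .
  have Feq: "fitloss M Z V Q0 Q1 = (\<lambda>w. LINT u:{0..1}|lborel. ((\<Sum>l\<in>UNIV. w l * hfun M Z V l u) - wP Q0 Q1 u)\<^sup>2)"
    by (rule ext) (simp only: fitloss_def hbar_def)
  have c: "continuous_on UNIV (fitloss M Z V Q0 Q1)"
    unfolding Feq by (rule fit_cont[OF h g])
  have m: "\<And>a b. fitloss M Z V Q0 Q1 (\<lambda>l. (a l + b l) / 2) \<le> (fitloss M Z V Q0 Q1 a + fitloss M Z V Q0 Q1 b) / 2"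
    unfolding Feq by (rule fit_mid[OF h g])
  note U = abstract_unique[OF c m Gamma_pd]
  show ?thesis unfolding Sset_def by (fact U)
qed

end
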